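(* Let $n\ge 2$ and consider the potential $V$ of the context with $\sigma=0$. There is a critical point $\mathbf a=(a_1,\dots,a_n)$ of $V$ on $\Omega$ (a symmetric collinear equilibrium) such that every $a_j$ lies on the real axis, $a_j=(p_j,0)$ with $p_j\in\mathbb R$, and $$p_1<p_2<\dots<p_n,\qquad p_{n+1-j}=-p_j\quad (j=1,\dots,n).$$
   Context: For $u=(u_1,\dots,u_n)\in(\mathbb R^2)^n$ let $$V(u)=\sum_{j=1}^{n-1}U(|u_{j+1}-u_j|^2)+\sum_{1\le j<k\le n}W(|u_j-u_k|^2),$$ where $U(x)=x-2x^{1/2}$ and $W\in C^2((0,\infty))$ satisfies $\lim_{x\to0}W(x)=\lim_{x\to0}(-W'(x))=+\infty$ and $\lim_{x\to\infty}W(x)=\lim_{x\to\infty}W'(x)=0$. $V$ is defined on $\Omega=\{u\in\mathbb R^{2n}:u_j\ne u_k\text{ for }j\ne k\}$; a critical point means $\nabla V(\mathbf a)=0$. *)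

theory Defs
  imports "HOL-Analysis.Analysis"
begin

text \<open>Points of the plane R^2 are represented as complex numbers; a configuration
  u = (u_1,...,u_n) is a function nat => complex, of which only the values at 1..n matter.\<close>

definition Upot :: "real \<Rightarrow> real" where
  "Upot x = x - 2 * sqrt x"

definition Vpot :: "(real \<Rightarrow> real) \<Rightarrow> nat \<Rightarrow> (nat \<Rightarrow> complex) \<Rightarrow> real" where
  "Vpot W n u =
     (\<Sum>j=1..n-1. Upot ((cmod (u (j+1) - u j))^2))
   + (\<Sum>j=1..n. \<Sum>k=j+1..n. W ((cmod (u j - u k))^2))"

definition inOmega :: "nat \<Rightarrow> (nat \<Rightarrow> complex) \<Rightarrow> bool" where
  "inOmega n u \<longleftrightarrow> (\<forall>j\<in>{1..n}. \<forall>k\<in>{1..n}. j \<noteq> k \<longrightarrow> u j \<noteq> u k)"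

definition critical_point :: "(real \<Rightarrow> real) \<Rightarrow> nat \<Rightarrow> (nat \<Rightarrow> complex) \<Rightarrow> bool" where
  "critical_point W n a \<longleftrightarrow>
     (\<forall>j\<in>{1..n}. \<forall>v::complex.
        ((\<lambda>t::real. Vpot W n (a(j := a j + of_real t * v))) has_real_derivative 0) (at 0))"

end

theory Submission imports Defs begin

definition ipc :: "complex \<Rightarrow> complex \<Rightarrow> real" where
  "ipc z w = Re z * Re w + Im z * Im w"

definition Upd :: "real \<Rightarrow> real" where "Upd x = 1 - inverse (sqrt x)"

definition Dfun :: "(real \<Rightarrow> real) \<Rightarrow> nat \<Rightarrow> (nat \<Rightarrow> complex) \<Rightarrow> (nat \<Rightarrow> complex) \<Rightarrow> real" where
  "Dfun W' n u h =
     (\<Sum>j=1..n-1. Upd ((cmod (u (j+1) - u j))^2) * (2 * ipc (u (j+1) - u j) (h (j+1) - h j)))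
   + (\<Sum>j=1..n. \<Sum>k=j+1..n. W' ((cmod (u j - u k))^2) * (2 * ipc (u j - u k) (h j - h k)))"

lemma Upot_deriv: "x > 0 \<Longrightarrow> (Upot has_real_derivative Upd x) (at x)"
  unfolding Upot_def[abs_def] Upd_def
  by (auto intro!: derivative_eq_intros)

lemma sqd: "((\<lambda>t. (cmod (z + complex_of_real t * w))^2) has_real_derivative 2 * ipc z w) (at 0)"
proof -
  have e: "(\<lambda>t. (cmod (z + complex_of_real t * w))^2) = (\<lambda>t. (Re z + t * Re w)^2 + (Im z + t * Im w)^2)"
    by (simp add: cmod_power2)
  show ?thesis unfolding e ipc_def
    by (auto intro!: derivative_eq_intros)
qed

lemma term_deriv:
  assumes "(f has_real_derivative D) (at ((cmod z)^2))"
  shows "((\<lambda>t. f ((cmod (z + complex_of_real t * w))^2)) has_real_derivative D * (2 * ipc z w)) (at 0)"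
proof -
  have "(f has_real_derivative D) (at ((cmod (z + complex_of_real 0 * w))^2))" using assms by simp
  from DERIV_chain2[OF this sqd] show ?thesis by simp
qed

lemma derivV:
  assumes om: "inOmega n u"
    and dW: "\<And>x. x > 0 \<Longrightarrow> (W has_real_derivative W' x) (at x)"
  shows "((\<lambda>t. Vpot W n (\<lambda>k. u k + complex_of_real t * h k)) has_real_derivative Dfun W' n u h) (at 0)"
proof -
  have e1: "u (j+1) + complex_of_real t * h (j+1) - (u j + complex_of_real t * h j)
      = (u (j+1) - u j) + complex_of_real t * (h (j+1) - h j)" for j t
    by (simp add: algebra_simps)
  have e2: "u j + complex_of_real t * h j - (u k + complex_of_real t * h k)
      = (u j - u k) + complex_of_real t * (h j - h k)" for j k t
    by (simp add: algebra_simps)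
  show ?thesis
    unfolding Vpot_def Dfun_def e1 e2
  proof (intro DERIV_add DERIV_sum)
    fix j assume j: "j \<in> {1..n-1}"
    then have "u (j+1) \<noteq> u j" using om unfolding inOmega_def by auto
    then have "(cmod (u (j+1) - u j))^2 > 0" by simp
    then show "((\<lambda>t. Upot ((cmod (u (j+1) - u j + complex_of_real t * (h (j+1) - h j)))^2)) has_real_derivative
        Upd ((cmod (u (j+1) - u j))^2) * (2 * ipc (u (j+1) - u j) (h (j+1) - h j))) (at 0)"
      by (intro term_deriv Upot_deriv)
  next
    fix j k assume j: "j \<in> {1..n}" and k: "k \<in> {j+1..n}"
    then have "u j \<noteq> u k" using om unfolding inOmega_def by auto
    then have "(cmod (u j - u k))^2 > 0" by simp
    then show "((\<lambda>t. W ((cmod (u j - u k + complex_of_real t * (h j - h k)))^2)) has_real_derivative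
        W' ((cmod (u j - u k))^2) * (2 * ipc (u j - u k) (h j - h k))) (at 0)"
      by (intro term_deriv dW)
  qed
qed

lemma Dfun_diff: "Dfun W' n u (\<lambda>k. h1 k - h2 k) = Dfun W' n u h1 - Dfun W' n u h2"
  unfolding Dfun_def ipc_def
  by (simp add: algebra_simps sum_subtractf[symmetric] sum.distrib[symmetric])

lemma Dfun_scale: "Dfun W' n u (\<lambda>k. complex_of_real c * h k) = c * Dfun W' n u h"
  unfolding Dfun_def ipc_def
  by (simp add: algebra_simps sum_distrib_left)

lemma Dfun_real: "Dfun W' n (\<lambda>k. complex_of_real (a k)) h = Dfun W' n (\<lambda>k. complex_of_real (a k)) (\<lambda>k. complex_of_real (Re (h k)))"
  unfolding Dfun_def ipc_def by simp

lemma Vpot_cong: "(\<And>k. k \<in> {1..n} \<Longrightarrow> u k = v k) \<Longrightarrow> Vpot W n u = Vpot W n v"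
  unfolding Vpot_def
  by (intro arg_cong2[where f="(+)"] sum.cong refl) auto

lemma Vpot_refl: "Vpot W n (\<lambda>k. - u (n+1-k)) = Vpot W n u"
proof -
  have A: "(\<Sum>j=1..n-1. Upot ((cmod (- u (n+1-(j+1)) - - u (n+1-j)))^2))
      = (\<Sum>j=1..n-1. Upot ((cmod (u (j+1) - u j))^2))"
    apply (rule sum.reindex_bij_witness[where i="\<lambda>j. n - j" and j="\<lambda>j. n - j"])
    apply (auto simp: norm_minus_commute Suc_diff_le)
    done
  have B: "(\<Sum>j=1..n. \<Sum>k=j+1..n. W ((cmod (- u (n+1-j) - - u (n+1-k)))^2))
      = (\<Sum>j=1..n. \<Sum>k=j+1..n. W ((cmod (u j - u k))^2))"
    apply (simp add: sum.Sigma)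
    apply (rule sum.reindex_bij_witness[where i="\<lambda>(j,k). (n+1-k, n+1-j)" and j="\<lambda>(j,k). (n+1-k, n+1-j)"])
    apply (auto simp: norm_minus_commute)
    done
  show ?thesis unfolding Vpot_def using A B by simp
qed


definition Fr :: "(real \<Rightarrow> real) \<Rightarrow> nat \<Rightarrow> (nat \<Rightarrow> real) \<Rightarrow> real" where
  "Fr W n p = (\<Sum>j=1..n-1. Upot ((p (j+1) - p j)^2)) + (\<Sum>j=1..n. \<Sum>k=j+1..n. W ((p j - p k)^2))"

lemma Vpot_real: "Vpot W n (\<lambda>k. complex_of_real (p k)) = Fr W n p"
  unfolding Vpot_def Fr_def by (simp flip: of_real_diff)

definition Sset :: "nat \<Rightarrow> (nat \<Rightarrow> real) \<Rightarrow> bool" where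
  "Sset n p \<longleftrightarrow> (\<forall>k. k \<notin> {1..n} \<longrightarrow> p k = 0) \<and> (\<forall>j\<in>{1..n}. p (n+1-j) = - p j)
     \<and> (\<forall>j\<in>{1..<n}. p j < p (j+1))"

lemma mono_chain:
  fixes f :: "nat \<Rightarrow> real"
  assumes "\<forall>i\<in>{1..<n}. f i \<le> f (i+1)"
  shows "1 \<le> j \<Longrightarrow> j \<le> k \<Longrightarrow> k \<le> n \<Longrightarrow> f j \<le> f k"
proof (induction k)
  case 0 then show ?case by simp
next
  case (Suc k)
  show ?case
  proof (cases "j = Suc k")
    case True then show ?thesis by simp
  next
    case False
    then have "j \<le> k" using Suc by simp
    then have "f j \<le> f k" using Suc by simp
    also have "f k \<le> f (Suc k)" using assms Suc \<open>j \<le> k\<close> by auto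
    finally show ?thesis .
  qed
qed

lemma coord_cont [continuous_intros]: "continuous_on S (\<lambda>x::'a \<Rightarrow> 'b::topological_space. x i)"
  by (rule continuous_on_subset[OF continuous_on_product_coordinates]) auto

lemma single_le:
  fixes f :: "'a \<Rightarrow> real"
  assumes "finite A" "j \<in> A" "\<And>i. i \<in> A \<Longrightarrow> - L \<le> f i" "L \<ge> 0"
  shows "f j \<le> sum f A + real (card A) * L"
proof -
  have "sum f A = f j + sum f (A - {j})" using assms by (simp add: sum.remove)
  moreover have "real (card (A - {j})) * (- L) \<le> sum f (A - {j})"
    using assms by (intro sum_bounded_below) auto
  moreover have "card (A - {j}) \<le> card A" using assms by (simp add: card_mono)
  moreover have "real (card (A - {j})) * L \<le> real (card A) * L"
    using assms \<open>card (A - {j}) \<le> card A\<close> by (intro mult_right_mono) auto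
  ultimately show ?thesis by linarith
qed

lemma sum_ge:
  fixes f :: "'a \<Rightarrow> real"
  assumes "\<And>i. i \<in> A \<Longrightarrow> - L \<le> f i" "L \<ge> 0" "card A \<le> N"
  shows "- (real N * L) \<le> sum f A"
proof -
  have "real (card A) * (- L) \<le> sum f A" using assms by (intro sum_bounded_below) auto
  moreover have "real (card A) * L \<le> real N * L" using assms by (intro mult_right_mono) auto
  ultimately show ?thesis by simp
qed

lemma Upot_sq: "Upot (d^2) = d^2 - 2 * \<bar>d\<bar>"
  unfolding Upot_def by simp

lemma Upot_ge: "- 1 \<le> Upot (d^2)"
proof -
  have "0 \<le> (\<bar>d\<bar> - 1)^2" by simp
  then show ?thesis unfolding Upot_sq by (simp add: power2_diff)
qed

lemma quad_bound:
  fixes x :: real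
  assumes "x \<ge> 0" "x^2 - 2 * x \<le> C"
  shows "x \<le> \<bar>C\<bar> + 3"
proof (rule ccontr)
  assume "\<not> ?thesis"
  then have h: "x > \<bar>C\<bar> + 3" by simp
  then have "x * 1 \<le> x * (x - 2)" using assms by (intro mult_left_mono) auto
  then have "x \<le> x^2 - 2 * x" by (simp add: power2_eq_square algebra_simps)
  then show False using h assms by simp
qed


lemma W_lower:
  fixes W W' :: "real \<Rightarrow> real"
  assumes dW: "\<And>x. x > 0 \<Longrightarrow> (W has_real_derivative W' x) (at x)"
    and lim0W: "filterlim W at_top (at_right 0)"
    and liminfW: "(W \<longlongrightarrow> 0) at_top"
  shows "\<exists>B\<ge>0. \<forall>x>0. - B \<le> W x"
proof -
  have Wc: "continuous_on {0<..} W"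
    using dW by (intro continuous_at_imp_continuous_on) (auto intro: DERIV_isCont)
  have "eventually (\<lambda>x. -1 < W x) at_top" using liminfW by (rule order_tendstoD) simp
  then obtain X where X: "\<And>x. x \<ge> X \<Longrightarrow> -1 < W x" by (auto simp: eventually_at_top_linorder)
  have "eventually (\<lambda>x. 0 \<le> W x) (at_right 0)" using lim0W by (simp add: filterlim_at_top)
  then obtain e where e: "e > 0" "\<And>y. y > 0 \<Longrightarrow> y < e \<Longrightarrow> 0 \<le> W y"
    by (auto simp: eventually_at_right_field)
  have "compact (W ` {e..X})"
    by (intro compact_continuous_image continuous_on_subset[OF Wc]) (use e in auto)
  then obtain b where b0: "\<forall>y\<in>W ` {e..X}. \<bar>y\<bar> \<le> b"
    using compact_imp_bounded bounded_real by blast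
  have b: "\<bar>W x\<bar> \<le> b" if "x \<in> {e..X}" for x using b0 that by blast
  show ?thesis
  proof (intro exI[of _ "max 1 b"] conjI allI impI)
    fix x :: real assume "x > 0"
    show "- max 1 b \<le> W x"
    proof (cases "x < e")
      case True then show ?thesis using e \<open>x>0\<close> by force
    next
      case False
      show ?thesis
      proof (cases "x \<ge> X")
        case True then show ?thesis using X[of x] by simp
      next
        case False
        then have "x \<in> {e..X}" using \<open>\<not> x < e\<close> by auto
        then show ?thesis using b[of x] by simp
      qed
    qed
  qed simp
qed

lemma minimizer:
  fixes W W' :: "real \<Rightarrow> real" and n :: nat
  assumes n2: "n \<ge> 2"
    and dW: "\<And>x. x > 0 \<Longrightarrow> (W has_real_derivative W' x) (at x)"
    and lim0W: "filterlim W at_top (at_right 0)"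
    and liminfW: "(W \<longlongrightarrow> 0) at_top"
  shows "\<exists>a \<delta>. Sset n a \<and> \<delta> > 0 \<and> (\<forall>j\<in>{1..<n}. a j + \<delta> \<le> a (j+1))
            \<and> (\<forall>p. Sset n p \<longrightarrow> Fr W n a \<le> Fr W n p)"
proof -
  have Wc: "continuous_on {0<..} W"
    using dW by (intro continuous_at_imp_continuous_on) (auto intro: DERIV_isCont)
  obtain B where B: "B \<ge> 0" "\<And>x. x > 0 \<Longrightarrow> - B \<le> W x"
    using W_lower[OF dW lim0W liminfW] by blast
  define p0 :: "nat \<Rightarrow> real" where "p0 k = (if k \<in> {1..n} then real k - (real n + 1) / 2 else 0)" for k
  have S0: "Sset n p0"
    unfolding Sset_def p0_def by (auto simp: of_nat_diff field_simps)
  define c where "c = Fr W n p0"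
  define C where "C = c + real n + 2 * (real n * (real n * B))"
  have boundU: "Upot ((p (j+1) - p j)^2) \<le> C" and boundW: "W ((p j' - p k)^2) \<le> C"
    if Sp: "Sset n p" and Fp: "Fr W n p \<le> c" and j: "j \<in> {1..n-1}"
      and j': "j' \<in> {1..n}" and k: "k \<in> {j'+1..n}" for p j j' k
  proof -
    have pos: "(p a - p b)^2 > 0" if "a \<in> {1..n}" "b \<in> {a+1..n}" for a b
    proof -
      have "p a - real a * 0 \<le> p (b-1) - real (b-1) * 0"
        by (rule mono_chain[of n "\<lambda>i. p i - real i * 0"]) (use Sp that in \<open>auto simp: Sset_def intro: less_imp_le\<close>)
      moreover have "p (b-1) < p (b - 1 + 1)"
      proof -
        have "b - 1 \<in> {1..<n}" using that by auto
        then show ?thesis using Sp unfolding Sset_def by blast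
      qed
      ultimately have "p a < p b" using that by simp
      then show ?thesis by simp
    qed
    have Wlow: "- B \<le> W ((p a - p b)^2)" if "a \<in> {1..n}" "b \<in> {a+1..n}" for a b
      using B(2) pos[OF that] by blast
    define US where "US = (\<Sum>j=1..n-1. Upot ((p (j+1) - p j)^2))"
    define WS where "WS = (\<Sum>j=1..n. \<Sum>k=j+1..n. W ((p j - p k)^2))"
    have FS: "US + WS \<le> c" using Fp unfolding Fr_def US_def WS_def .
    have inner_ge: "- (real n * B) \<le> (\<Sum>k=a+1..n. W ((p a - p k)^2))" if "a \<in> {1..n}" for a
      by (rule sum_ge) (use Wlow that B in auto)
    have WSge: "- (real n * (real n * B)) \<le> WS"
      unfolding WS_def by (rule sum_ge) (use inner_ge B in auto)
    have USge: "- (real n * 1) \<le> US"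
      unfolding US_def by (rule sum_ge) (use Upot_ge in auto)
    have "Upot ((p (j+1) - p j)^2) \<le> US + real (card {1..n-1}) * 1"
      unfolding US_def by (rule single_le) (use j Upot_ge in auto)
    moreover have "real (card {1..n-1}) \<le> real n" by simp
    moreover have "0 \<le> real n * (real n * B)" using B by simp
    ultimately show "Upot ((p (j+1) - p j)^2) \<le> C"
      using FS WSge unfolding C_def by linarith
    have "W ((p j' - p k)^2) \<le> (\<Sum>k=j'+1..n. W ((p j' - p k)^2)) + real (card {j'+1..n}) * B"
      by (rule single_le) (use k Wlow j' B in auto)
    also have "real (card {j'+1..n}) * B \<le> real n * B" using B by (intro mult_right_mono) auto
    also have "(\<Sum>k=j'+1..n. W ((p j' - p k)^2)) \<le> WS + real (card {1..n}) * (real n * B)"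
      unfolding WS_def by (rule single_le) (use j' inner_ge B in auto)
    finally have "W ((p j' - p k)^2) \<le> WS + real n * (real n * B) + real n * B" by simp
    moreover have "real n * B \<le> real n * (real n * B)"
      using n2 B by (intro mult_left_mono) (auto simp: mult_le_cancel_right1)
    ultimately show "W ((p j' - p k)^2) \<le> C"
      using FS USge unfolding C_def by linarith
  qed
  have "eventually (\<lambda>x. C + 1 \<le> W x) (at_right 0)" using lim0W by (simp add: filterlim_at_top)
  then obtain \<epsilon> where \<epsilon>: "\<epsilon> > 0" "\<And>y. y > 0 \<Longrightarrow> y < \<epsilon> \<Longrightarrow> C + 1 \<le> W y"
    by (auto simp: eventually_at_right_field)
  define \<delta> where "\<delta> = sqrt \<epsilon>"
  have \<delta>: "\<delta> > 0" using \<epsilon> by (simp add: \<delta>_def)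
  define G where "G = \<bar>C\<bar> + 3"
  define M where "M = real n * G"
  have G: "G > 0" by (simp add: G_def)
  define T where "T = {p. (\<forall>k. k \<notin> {1..n} \<longrightarrow> p k = 0) \<and> (\<forall>k\<in>{1..n}. \<bar>p k\<bar> \<le> M)
       \<and> (\<forall>j\<in>{1..n}. p (n+1-j) = - p j) \<and> (\<forall>j\<in>{1..<n}. p j + \<delta> \<le> p (j+1))}"
  have chainT: "p a + real (b - a) * \<delta> \<le> p b" if "p \<in> T" "1 \<le> a" "a \<le> b" "b \<le> n" for p a b
  proof -
    have "p a - real a * \<delta> \<le> p b - real b * \<delta>"
      by (rule mono_chain[of n "\<lambda>i. p i - real i * \<delta>"])
         (use that in \<open>auto simp: T_def algebra_simps\<close>)
    then show ?thesis using that by (simp add: of_nat_diff algebra_simps)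
  qed
  have TS: "Sset n p" if "p \<in> T" for p
    using that \<delta> unfolding T_def Sset_def by force
  have inT: "p \<in> T" if Sp: "Sset n p" and Fp: "Fr W n p \<le> c" for p
  proof -
    have gap_lo: "p j + \<delta> \<le> p (j+1)" if j: "j \<in> {1..<n}" for j
    proof -
      have W1: "W ((p j - p (j+1))^2) \<le> C" by (rule boundW[OF Sp Fp, of 1]) (use j n2 in auto)
      have lt: "p j < p (j+1)" using Sp j unfolding Sset_def by auto
      have "\<epsilon> \<le> (p j - p (j+1))^2"
      proof (rule ccontr)
        assume "\<not> ?thesis"
        then have "C + 1 \<le> W ((p j - p (j+1))^2)" using lt by (intro \<epsilon>(2)) auto
        then show False using W1 by simp
      qed
      then have "sqrt \<epsilon> \<le> sqrt ((p j - p (j+1))^2)" by (rule real_sqrt_le_mono)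
      then show ?thesis using lt by (simp add: \<delta>_def)
    qed
    have gap_hi: "p (j+1) \<le> p j + G" if j: "j \<in> {1..<n}" for j
    proof -
      have "Upot ((p (j+1) - p j)^2) \<le> C" by (rule boundU[OF Sp Fp _ _ , of j 1 2]) (use j n2 in auto)
      then have "\<bar>p (j+1) - p j\<bar>^2 - 2 * \<bar>p (j+1) - p j\<bar> \<le> C" by (simp add: Upot_sq)
      then have "\<bar>p (j+1) - p j\<bar> \<le> G" unfolding G_def by (intro quad_bound) auto
      then show ?thesis by simp
    qed
    have mono: "p a \<le> p b" if "1 \<le> a" "a \<le> b" "b \<le> n" for a b
      by (rule mono_chain[of n p]) (use Sp that in \<open>auto simp: Sset_def intro: less_imp_le\<close>)
    have "real 1 * G - p 1 \<le> real n * G - p n"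
      by (rule mono_chain[of n "\<lambda>i. real i * G - p i"]) (use gap_hi n2 in \<open>auto simp: algebra_simps\<close>)
    moreover have "p n = - p 1" 
    proof -
      have "(1::nat) \<in> {1..n}" using n2 by auto
      then have "p (n+1-1) = - p 1" using Sp unfolding Sset_def by blast
      then show ?thesis by simp
    qed
    moreover have "0 \<le> real n * G" using G by simp
    ultimately have pn: "p n \<le> M" using G unfolding M_def by linarith
    have "\<bar>p k\<bar> \<le> M" if "k \<in> {1..n}" for k
      using mono[of 1 k] mono[of k n] that pn \<open>p n = - p 1\<close> by auto
    then show ?thesis using Sp gap_lo unfolding T_def Sset_def by auto
  qed
  define Bx where "Bx k = (if k \<in> {1..n} then {-M..M} else {0::real})" for k
  have Teq: "T = PiE UNIV Bx \<inter> (\<Inter>j\<in>{1..n}. {p. p (n+1-j) = - p j}) \<inter> (\<Inter>j\<in>{1..<n}. {p. p j + \<delta> \<le> p (j+1)})"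
  proof -
    have mem: "p \<in> PiE UNIV Bx \<longleftrightarrow> (\<forall>k. k \<notin> {1..n} \<longrightarrow> p k = 0) \<and> (\<forall>k\<in>{1..n}. \<bar>p k\<bar> \<le> M)" for p
    proof -
      have "p \<in> PiE UNIV Bx \<longleftrightarrow> (\<forall>k. p k \<in> Bx k)" by (simp add: PiE_UNIV_domain Pi_iff)
      also have "\<dots> \<longleftrightarrow> (\<forall>k. k \<notin> {1..n} \<longrightarrow> p k = 0) \<and> (\<forall>k\<in>{1..n}. \<bar>p k\<bar> \<le> M)"
      proof
        assume h: "\<forall>k. p k \<in> Bx k"
        show "(\<forall>k. k \<notin> {1..n} \<longrightarrow> p k = 0) \<and> (\<forall>k\<in>{1..n}. \<bar>p k\<bar> \<le> M)"
        proof (intro conjI allI impI ballI)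
          fix k assume "k \<notin> {1..n}" then show "p k = 0" using h[rule_format, of k] unfolding Bx_def by (auto split: if_splits)
        next
          fix k assume "k \<in> {1..n}" then show "\<bar>p k\<bar> \<le> M" using h[rule_format, of k] unfolding Bx_def by (simp add: abs_le_iff)
        qed
      next
        assume h: "(\<forall>k. k \<notin> {1..n} \<longrightarrow> p k = 0) \<and> (\<forall>k\<in>{1..n}. \<bar>p k\<bar> \<le> M)"
        show "\<forall>k. p k \<in> Bx k"
        proof
          fix k show "p k \<in> Bx k"
          proof (cases "k \<in> {1..n}")
            case True
            then have "\<bar>p k\<bar> \<le> M" using h by blast
            then show ?thesis using True unfolding Bx_def by (simp add: abs_le_iff)
          next
            case False
            then have "p k = 0" using h by blast
            then show ?thesis using False unfolding Bx_def by auto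
          qed
        qed
      qed
      finally show ?thesis .
    qed
    show ?thesis unfolding T_def
      by (rule set_eqI) (simp only: mem Int_iff INT_iff mem_Collect_eq conj_assoc)
  qed
  have "compactin (product_topology (\<lambda>i. euclidean) UNIV) (PiE UNIV Bx)"
    by (subst compactin_PiE) (auto simp: Bx_def)
  then have "compact (PiE UNIV Bx :: (nat \<Rightarrow> real) set)"
    by (simp add: euclidean_product_topology)
  moreover have "closed (\<Inter>j\<in>{1..n}. {p::nat\<Rightarrow>real. p (n+1-j) = - p j})"
    by (intro closed_INT ballI closed_Collect_eq continuous_on_minus coord_cont)
  moreover have "closed (\<Inter>j\<in>{1..<n}. {p::nat\<Rightarrow>real. p j + \<delta> \<le> p (j+1)})"
    by (intro closed_INT ballI closed_Collect_le continuous_on_add continuous_on_const coord_cont)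
  ultimately have cT: "compact T" unfolding Teq by (intro compact_Int_closed closed_Int)
  have Fc: "continuous_on T (Fr W n)"
    unfolding Fr_def[abs_def]
  proof (rule continuous_on_add)
    show "continuous_on T (\<lambda>p. \<Sum>j = 1..n - 1. Upot ((p (j + 1) - p j)\<^sup>2))"
    proof (rule continuous_on_sum)
      fix j
      have c1: "continuous_on T (\<lambda>p. (p (j + 1) - p j)\<^sup>2)"
        by (intro continuous_on_power continuous_on_diff coord_cont)
      have c2: "continuous_on UNIV Upot" unfolding Upot_def[abs_def]
        by (intro continuous_on_diff continuous_on_id continuous_on_mult continuous_on_const continuous_on_real_sqrt)
      show "continuous_on T (\<lambda>p. Upot ((p (j + 1) - p j)\<^sup>2))"
        using continuous_on_compose2[OF c2 c1] by auto
    qed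
    show "continuous_on T (\<lambda>p. \<Sum>j = 1..n. \<Sum>k = j + 1..n. W ((p j - p k)\<^sup>2))"
    proof (intro continuous_on_sum)
      fix j k assume j: "j \<in> {1..n}" and k: "k \<in> {j+1..n}"
      show "continuous_on T (\<lambda>x. W ((x j - x k)^2))"
      proof (rule continuous_on_compose2[OF Wc])
        show "continuous_on T (\<lambda>x. (x j - x k)^2)" by (intro continuous_on_power continuous_on_diff coord_cont)
        show "(\<lambda>x. (x j - x k)^2) ` T \<subseteq> {0<..}"
        proof
          fix y assume "y \<in> (\<lambda>x. (x j - x k)^2) ` T"
          then obtain x where x: "x \<in> T" "y = (x j - x k)^2" by auto
          have "x j + real (k - j) * \<delta> \<le> x k" using chainT[OF x(1), of j k] j k by auto
          moreover have "real (k - j) * \<delta> > 0" using j k \<delta> by auto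
          ultimately have "x j < x k" by linarith
          then show "y \<in> {0<..}" using x by auto
        qed
      qed
    qed
  qed
  define K where "K = T \<inter> Fr W n -` {..c}"
  have "closed K" unfolding K_def
    by (rule continuous_closed_preimage[OF Fc compact_imp_closed[OF cT]]) simp
  then have cK: "compact K" using compact_Int_closed[OF cT \<open>closed K\<close>] unfolding K_def by (simp add: Int_absorb1)
  have p0K: "p0 \<in> K" unfolding K_def using inT[OF S0] by (simp add: c_def)
  obtain a where aK: "a \<in> K" and amin: "\<And>y. y \<in> K \<Longrightarrow> Fr W n a \<le> Fr W n y"
    using continuous_attains_inf[OF cK _ continuous_on_subset[OF Fc]] p0K unfolding K_def by blast
  show ?thesis
  proof (intro exI conjI allI impI)
    show "Sset n a" using aK TS unfolding K_def by auto
    show "\<delta> > 0" by (rule \<delta>)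
    show "\<forall>j\<in>{1..<n}. a j + \<delta> \<le> a (j+1)" using aK unfolding K_def T_def by auto
    fix p assume "Sset n p"
    show "Fr W n a \<le> Fr W n p"
    proof (cases "Fr W n p \<le> c")
      case True then show ?thesis using inT[OF \<open>Sset n p\<close>] amin unfolding K_def by auto
    next
      case False then show ?thesis using aK unfolding K_def by auto
    qed
  qed
qed


theorem corollary1:
  fixes W W' W'' :: "real \<Rightarrow> real" and n :: nat
  assumes n2: "n \<ge> 2"
    and dW: "\<And>x. x > 0 \<Longrightarrow> (W has_real_derivative W' x) (at x)"
    and dW': "\<And>x. x > 0 \<Longrightarrow> (W' has_real_derivative W'' x) (at x)"
    and cW'': "continuous_on {0<..} W''"
    and lim0W: "filterlim W at_top (at_right 0)"
    and lim0W': "filterlim (\<lambda>x. - W' x) at_top (at_right 0)"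
    and liminfW: "(W \<longlongrightarrow> 0) at_top"
    and liminfW': "(W' \<longlongrightarrow> 0) at_top"
  shows "\<exists>a :: nat \<Rightarrow> complex.
           inOmega n a \<and> critical_point W n a
         \<and> (\<forall>j\<in>{1..n}. Im (a j) = 0)
         \<and> (\<forall>j\<in>{1..<n}. Re (a j) < Re (a (j+1)))
         \<and> (\<forall>j\<in>{1..n}. Re (a (n+1-j)) = - Re (a j))"
proof -
  obtain a \<delta> where Sa: "Sset n a" and \<delta>: "\<delta> > 0" and gap: "\<forall>j\<in>{1..<n}. a j + \<delta> \<le> a (j+1)"
    and amin: "\<And>p. Sset n p \<Longrightarrow> Fr W n a \<le> Fr W n p"
    using minimizer[OF n2 dW lim0W liminfW] by blast
  define A where "A = (\<lambda>k. complex_of_real (a k))"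
  have azero: "\<And>k. k \<notin> {1..n} \<Longrightarrow> a k = 0" and asym: "\<And>j. j \<in> {1..n} \<Longrightarrow> a (n+1-j) = - a j"
    and aord: "\<And>j. j \<in> {1..<n} \<Longrightarrow> a j < a (j+1)"
    using Sa unfolding Sset_def by auto
  have chain: "a j + real (k - j) * \<delta> \<le> a k" if "1 \<le> j" "j \<le> k" "k \<le> n" for j k
  proof -
    have "a j - real j * \<delta> \<le> a k - real k * \<delta>"
      by (rule mono_chain[of n "\<lambda>i. a i - real i * \<delta>"]) (use that gap in \<open>auto simp: algebra_simps\<close>)
    then show ?thesis using that by (simp add: of_nat_diff algebra_simps)
  qed
  have strict: "a j < a k" if "1 \<le> j" "j < k" "k \<le> n" for j k
  proof -
    have "real (k - j) * \<delta> > 0" using that \<delta> by auto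
    then show ?thesis using chain[of j k] that by linarith
  qed
  have om: "inOmega n A"
    unfolding inOmega_def A_def
  proof (intro ballI impI)
    fix j k assume j: "j \<in> {1..n}" and k: "k \<in> {1..n}" and "j \<noteq> k"
    then consider "j < k" | "k < j" by linarith
    then have "a j \<noteq> a k"
      by cases (use strict[of j k] strict[of k j] j k in auto)
    then show "complex_of_real (a j) \<noteq> complex_of_real (a k)" by simp
  qed
  have dV: "((\<lambda>t. Vpot W n (\<lambda>k. A k + complex_of_real t * h k)) has_real_derivative Dfun W' n A h) (at 0)" for h
    by (rule derivV[OF om dW])
  have sym0: "Dfun W' n A (\<lambda>k. complex_of_real (q k)) = 0"
    if qz: "\<And>k. k \<notin> {1..n} \<Longrightarrow> q k = 0" and qs: "\<And>j. j \<in> {1..n} \<Longrightarrow> q (n+1-j) = - q j" for q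
  proof -
    define Q where "Q = (\<Sum>k\<in>{1..n}. \<bar>q k\<bar>)"
    have Qb: "\<bar>q k\<bar> \<le> Q" if "k \<in> {1..n}" for k
      unfolding Q_def using that by (intro member_le_sum) auto
    have Q0: "Q \<ge> 0" unfolding Q_def by (intro sum_nonneg) auto
    define d where "d = \<delta> / (2 * Q + 1)"
    have d: "d > 0" using \<delta> Q0 by (simp add: d_def)
    have feq: "Vpot W n (\<lambda>k. A k + complex_of_real y * complex_of_real (q k)) = Fr W n (\<lambda>k. a k + y * q k)" for y
    proof -
      have "(\<lambda>k. A k + complex_of_real y * complex_of_real (q k)) = (\<lambda>k. complex_of_real (a k + y * q k))"
        by (simp add: A_def)
      then show ?thesis by (simp only: Vpot_real)
    qed
    show ?thesis
    proof (rule DERIV_local_min[OF dV d], intro allI impI)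
      fix y :: real assume "\<bar>0 - y\<bar> < d"
      then have y: "\<bar>y\<bar> * (2 * Q + 1) < \<delta>" using Q0 by (simp add: d_def field_simps)
      have "Sset n (\<lambda>k. a k + y * q k)"
        unfolding Sset_def
      proof (intro conjI allI impI ballI)
        fix k assume "k \<notin> {1..n}" then show "a k + y * q k = 0" using azero qz by simp
      next
        fix j assume "j \<in> {1..n}" then show "a (n+1-j) + y * q (n+1-j) = - (a j + y * q j)"
          using asym qs by simp
      next
        fix j assume j: "j \<in> {1..<n}"
        have "\<bar>q (j+1) - q j\<bar> \<le> 2 * Q" using Qb[of j] Qb[of "j+1"] j by auto
        then have "\<bar>y\<bar> * \<bar>q (j+1) - q j\<bar> \<le> \<bar>y\<bar> * (2 * Q)" by (intro mult_left_mono) auto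
        also have "\<dots> \<le> \<bar>y\<bar> * (2 * Q + 1)" by (intro mult_left_mono) auto
        finally have "\<bar>y * (q (j+1) - q j)\<bar> < \<delta>" using y by (simp add: abs_mult)
        moreover have "a j + \<delta> \<le> a (j+1)" using gap j by auto
        ultimately show "a j + y * q j < a (j+1) + y * q (j+1)"
          by (simp add: algebra_simps abs_less_iff)
      qed
      then have "Fr W n a \<le> Fr W n (\<lambda>k. a k + y * q k)" by (rule amin)
      then show "Vpot W n (\<lambda>k. A k + complex_of_real 0 * complex_of_real (q k))
          \<le> Vpot W n (\<lambda>k. A k + complex_of_real y * complex_of_real (q k))"
        using feq[of 0] feq[of y] by simp
    qed
  qed
  define ev where "ev j = (\<lambda>k::nat. if k = j then (1::complex) else 0)" for j
  define g where "g j = Dfun W' n A (ev j)" for j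
  have antisym: "g j = - g (n+1-j)" if j: "j \<in> {1..n}" for j
  proof -
    define m where "m = n+1-j"
    have m: "m \<in> {1..n}" using j by (auto simp: m_def)
    have evr: "ev j (n+1-k) = ev m k" if "k \<in> {1..n}" for k
      using that j unfolding ev_def m_def by auto
    have eq: "(\<lambda>t. Vpot W n (\<lambda>k. A k + complex_of_real t * ev j k))
        = (\<lambda>t. Vpot W n (\<lambda>k. A k + complex_of_real t * (- ev m k)))"
    proof
      fix t
      have "Vpot W n (\<lambda>k. A k + complex_of_real t * ev j k)
          = Vpot W n (\<lambda>k. - (A (n+1-k) + complex_of_real t * ev j (n+1-k)))"
        using Vpot_refl[of W n "\<lambda>k. A k + complex_of_real t * ev j k"] by simp
      also have "\<dots> = Vpot W n (\<lambda>k. A k + complex_of_real t * (- ev m k))"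
      proof (rule Vpot_cong)
        fix k assume k: "k \<in> {1..n}"
        show "- (A (n+1-k) + complex_of_real t * ev j (n+1-k)) = A k + complex_of_real t * (- ev m k)"
          using asym[OF k] evr[OF k] by (simp add: A_def)
      qed
      finally show "Vpot W n (\<lambda>k. A k + complex_of_real t * ev j k)
          = Vpot W n (\<lambda>k. A k + complex_of_real t * (- ev m k))" .
    qed
    have d1: "((\<lambda>t. Vpot W n (\<lambda>k. A k + complex_of_real t * ev j k)) has_real_derivative g j) (at 0)"
      unfolding g_def by (rule dV)
    have "(\<lambda>k. - ev m k) = (\<lambda>k. complex_of_real (-1) * ev m k)" by simp
    then have "Dfun W' n A (\<lambda>k. - ev m k) = - g m"
      using Dfun_scale[of W' n A "-1" "ev m"] by (simp add: g_def)
    then have d2: "((\<lambda>t. Vpot W n (\<lambda>k. A k + complex_of_real t * ev j k)) has_real_derivative - g m) (at 0)"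
      unfolding eq using dV[of "\<lambda>k. - ev m k"] by simp
    show ?thesis using DERIV_unique[OF d1 d2] by (simp add: m_def)
  qed
  have g0: "g j = 0" if j: "j \<in> {1..n}" for j
  proof -
    define m where "m = n+1-j"
    have m: "m \<in> {1..n}" using j by (auto simp: m_def)
    define q where "q k = (if k = j then 1 else 0) - (if k = m then (1::real) else 0)" for k
    have "Dfun W' n A (\<lambda>k. complex_of_real (q k)) = 0"
    proof (rule sym0)
      fix k assume "k \<notin> {1..n}" then show "q k = 0" using j m unfolding q_def by auto
    next
      fix i assume i: "i \<in> {1..n}"
      have "(n+1-i = j) = (i = m)" "(n+1-i = m) = (i = j)" using i j by (auto simp: m_def)
      then show "q (n+1-i) = - q i" unfolding q_def by auto
    qed
    moreover have "(\<lambda>k. complex_of_real (q k)) = (\<lambda>k. ev j k - ev m k)"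
      unfolding q_def ev_def by auto
    ultimately have "g j - g m = 0" by (simp add: Dfun_diff g_def)
    then show ?thesis using antisym[OF j] by (simp add: m_def)
  qed
  have crit: "critical_point W n A"
    unfolding critical_point_def
  proof (intro ballI allI)
    fix j v assume j: "j \<in> {1..n}"
    define h where "h = (\<lambda>k::nat. if k = j then (v::complex) else 0)"
    have e1: "(\<lambda>t. Vpot W n (A(j := A j + complex_of_real t * v))) = (\<lambda>t. Vpot W n (\<lambda>k. A k + complex_of_real t * h k))"
      by (rule ext, rule arg_cong[where f="Vpot W n"]) (auto simp: h_def)
    have "Dfun W' n A h = Dfun W' n A (\<lambda>k. complex_of_real (Re (h k)))"
      unfolding A_def by (rule Dfun_real)
    also have "(\<lambda>k. complex_of_real (Re (h k))) = (\<lambda>k. complex_of_real (Re v) * ev j k)"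
      by (auto simp: h_def ev_def)
    also have "Dfun W' n A \<dots> = Re v * g j" by (simp add: Dfun_scale g_def)
    also have "\<dots> = 0" using g0[OF j] by simp
    finally have "Dfun W' n A h = 0" .
    then show "((\<lambda>t. Vpot W n (A(j := A j + complex_of_real t * v))) has_real_derivative 0) (at 0)"
      unfolding e1 using dV[of h] by simp
  qed
  show ?thesis
  proof (intro exI[of _ A] conjI ballI)
    show "inOmega n A" by (rule om)
    show "critical_point W n A" by (rule crit)
    fix j show "Im (A j) = 0" by (simp add: A_def)
  next
    fix j assume "j \<in> {1..<n}" then show "Re (A j) < Re (A (j+1))" using aord by (simp add: A_def)
  next
    fix j assume "j \<in> {1..n}" then show "Re (A (n+1-j)) = - Re (A j)" using asym by (simp add: A_def)
  qed
qed

end
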